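(* For every constant $d>1$, every (deterministic) $d$-approximation algorithm for the sum of a sorted list of nonnegative numbers must, in the worst case, make $\Omega\!\left(\min\!\left(\log n,\ \log\frac{x_{max}}{x_{min}}\right)\right)$ (adaptive) queries to the input list, where $n$ is the length of the list and $x_{max}$ and $x_{min}$ are the largest and the least positive elements of the input list, respectively.
   Context: The input is a list $a_1\le a_2\le\cdots\le a_n$ of nonnegative reals sorted in nondecreasing order; the algorithm accesses it only by adaptive queries, each revealing one entry $a_i$. A real number $s$ is a $d$-approximation for the sum if $\frac{1}{d}\sum_{i=1}^n a_i\le s\le d\sum_{i=1}^n a_i$. *)

theory Defs
  imports Complex_Main
begin

text \<open>A deterministic adaptive query algorithm (for inputs of a fixed length n) is a
decision tree: at a node Query i f it queries entry i (0-based) of the input and continues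
with the subtree f v, where v is the revealed value; at a leaf it outputs its estimate.\<close>

datatype qtree = Leaf real | Query nat "real \<Rightarrow> qtree"

definition answer :: "real list \<Rightarrow> nat \<Rightarrow> real" where
  "answer xs i = (if i < length xs then xs ! i else 0)"

primrec run_output :: "qtree \<Rightarrow> real list \<Rightarrow> real" where
  "run_output (Leaf s) xs = s"
| "run_output (Query i f) xs = run_output (f (answer xs i)) xs"

primrec num_queries :: "qtree \<Rightarrow> real list \<Rightarrow> nat" where
  "num_queries (Leaf s) xs = 0"
| "num_queries (Query i f) xs = Suc (num_queries (f (answer xs i)) xs)"

definition d_approx :: "real \<Rightarrow> real \<Rightarrow> real \<Rightarrow> bool" where
  "d_approx d S s \<longleftrightarrow> S / d \<le> s \<and> s \<le> d * S"

definition valid_input :: "nat \<Rightarrow> real list \<Rightarrow> bool" where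
  "valid_input n xs \<longleftrightarrow> length xs = n \<and> sorted xs \<and> (\<forall>x\<in>set xs. 0 \<le> x)"

definition approx_alg :: "real \<Rightarrow> nat \<Rightarrow> qtree \<Rightarrow> bool" where
  "approx_alg d n T \<longleftrightarrow> (\<forall>xs. valid_input n xs \<longrightarrow> d_approx d (sum_list xs) (run_output T xs))"

definition xmax :: "real list \<Rightarrow> real" where
  "xmax xs = Max (set xs)"

definition xmin_pos :: "real list \<Rightarrow> real" where
  "xmin_pos xs = Min {x \<in> set xs. 0 < x}"

end

theory Submission
  imports Defs "HOL-Analysis.Harmonic_Numbers"
begin

primrec qset :: "qtree \<Rightarrow> real list \<Rightarrow> nat set" where
  "qset (Leaf s) xs = {}"
| "qset (Query i f) xs = insert i (qset (f (answer xs i)) xs)"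

lemma qset_finite_card: "finite (qset T xs) \<and> card (qset T xs) \<le> num_queries T xs"
proof (induction T)
  case (Query i f)
  have "finite (qset (f (answer xs i)) xs) \<and> card (qset (f (answer xs i)) xs) \<le> num_queries (f (answer xs i)) xs"
    using Query by simp
  then show ?case by (auto simp: card_insert_if)
qed simp

lemma same_run:
  "(\<forall>i\<in>qset T xs. answer ys i = answer xs i) \<Longrightarrow>
     run_output T ys = run_output T xs \<and> num_queries T ys = num_queries T xs"
  by (induction T) auto

definition w :: "real \<Rightarrow> nat \<Rightarrow> real" where
  "w R k = (if real k \<le> R then 1 / real k else 0)"

definition xs0 :: "nat \<Rightarrow> real \<Rightarrow> real list" where
  "xs0 n R = map (\<lambda>p. w R (n - p)) [0..<n]"

definition low :: "nat \<Rightarrow> real \<Rightarrow> nat set \<Rightarrow> real list" where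
  "low n R Q = map (\<lambda>p. Max (insert 0 ((\<lambda>q. w R (n - q)) ` {q\<in>Q. q \<le> p}))) [0..<n]"

lemma w_nonneg: "0 \<le> w R k" by (simp add: w_def)

lemma w_mono: "k \<le> l \<Longrightarrow> 0 < k \<Longrightarrow> w R l \<le> w R k"
  by (auto simp: w_def frac_le)

lemma w_le: "0 < k \<Longrightarrow> real k * w R k \<le> 1"
  by (simp add: w_def)

lemma valid_xs0: "valid_input n (xs0 n R)"
  unfolding valid_input_def xs0_def
  by (auto simp: sorted_iff_nth_mono w_nonneg intro!: w_mono)

lemma valid_low: "valid_input n (low n R Q)"
  unfolding valid_input_def low_def
  by (auto simp: sorted_iff_nth_mono)

lemma low_agree:
  assumes "q \<in> Q" "q < n" "finite Q"
  shows "low n R Q ! q = w R (n - q)"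
proof -
  have "Max (insert 0 ((\<lambda>q. w R (n - q)) ` {q'\<in>Q. q' \<le> q})) = w R (n - q)"
    apply (rule Max_eqI)
    using assms by (auto simp: w_nonneg intro!: w_mono)
  then show ?thesis using assms by (simp add: low_def)
qed

lemma low_sum:
  assumes "finite Q" "Q \<subseteq> {..<n}"
  shows "sum_list (low n R Q) \<le> real (card Q)"
proof -
  have "sum_list (low n R Q) = (\<Sum>p<n. Max (insert 0 ((\<lambda>q. w R (n - q)) ` {q\<in>Q. q \<le> p})))"
    by (simp add: low_def sum_list_sum_nth atLeast0LessThan)
  also have "\<dots> \<le> (\<Sum>p<n. \<Sum>q\<in>Q. if q \<le> p then w R (n - q) else 0)"
  proof (rule sum_mono)
    fix p
    have e: "(\<Sum>q\<in>Q. if q \<le> p then w R (n - q) else 0) = (\<Sum>q\<in>{q\<in>Q. q \<le> p}. w R (n - q))"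
      using assms(1) by (simp add: sum.inter_filter)
    show "Max (insert 0 ((\<lambda>q. w R (n - q)) ` {q\<in>Q. q \<le> p})) \<le> (\<Sum>q\<in>Q. if q \<le> p then w R (n - q) else 0)"
      unfolding e using assms(1)
      by (auto simp: w_nonneg sum_nonneg intro!: member_le_sum)
  qed
  also have "\<dots> = (\<Sum>q\<in>Q. \<Sum>p<n. if q \<le> p then w R (n - q) else 0)"
    by (rule sum.swap)
  also have "\<dots> \<le> (\<Sum>q\<in>Q. 1)"
  proof (rule sum_mono)
    fix q assume q: "q \<in> Q"
    have "(\<Sum>p<n. if q \<le> p then w R (n - q) else 0) = (\<Sum>p\<in>{p\<in>{..<n}. q \<le> p}. w R (n - q))"
      using sum.inter_filter[of "{..<n}" "\<lambda>p. w R (n-q)" "\<lambda>p. q \<le> p"] by simp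
    also have "{p\<in>{..<n}. q \<le> p} = {q..<n}" by auto
    also have "(\<Sum>p\<in>{q..<n}. w R (n - q)) = real (n - q) * w R (n - q)" by simp
    also have "\<dots> \<le> 1" using q assms(2) by (intro w_le) auto
    finally show "(\<Sum>p<n. if q \<le> p then w R (n - q) else 0) \<le> 1" .
  qed
  finally show ?thesis by simp
qed

lemma xs0_nth: "p < n \<Longrightarrow> xs0 n R ! p = w R (n - p)"
  by (simp add: xs0_def)

lemma xs0_sum:
  assumes "n \<ge> 2" "R \<ge> 2"
  shows "min (ln (real n)) (ln R) \<le> sum_list (xs0 n R)"
proof -
  define m where "m = min n (nat \<lfloor>R\<rfloor>)"
  have "sum_list (xs0 n R) = (\<Sum>p<n. w R (n - p))"
    by (simp add: xs0_def sum_list_sum_nth atLeast0LessThan)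
  also have "\<dots> = (\<Sum>k\<in>{1..n}. w R k)"
    by (rule sum.reindex_bij_witness[of _ "\<lambda>k. n - k" "\<lambda>p. n - p"]) auto
  also have "\<dots> \<ge> (\<Sum>k\<in>{1..m}. w R k)"
    by (rule sum_mono2) (auto simp: m_def w_nonneg)
  also have "(\<Sum>k\<in>{1..m}. w R k) = harm m"
    unfolding harm_def
  proof (rule sum.cong)
    fix k assume "k \<in> {1..m}"
    then have "k \<le> nat \<lfloor>R\<rfloor>" by (simp add: m_def)
    then have "int k \<le> \<lfloor>R\<rfloor>" using assms by linarith
    then have "real k \<le> R" by linarith
    then show "w R k = inverse (real k)" by (simp add: w_def divide_inverse)
  qed simp
  finally have h: "harm m \<le> sum_list (xs0 n R)" .
  have "min (ln (real n)) (ln R) \<le> ln (real m + 1)"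
  proof (cases "n \<le> nat \<lfloor>R\<rfloor>")
    case True
    then have "m = n" by (simp add: m_def)
    have "ln (real n) \<le> ln (real n + 1)" using assms by simp
    then show ?thesis using \<open>m = n\<close> by simp
  next
    case False
    then have "m = nat \<lfloor>R\<rfloor>" by (simp add: m_def)
    then have "R \<le> real m + 1" using assms by linarith
    then have "ln R \<le> ln (real m + 1)" using assms by simp
    then show ?thesis by simp
  qed
  then show ?thesis using h ln_le_harm[of m] by linarith
qed

lemma xs0_set: "x \<in> set (xs0 n R) \<Longrightarrow> \<exists>k. 0 < k \<and> x = w R k"
proof -
  assume "x \<in> set (xs0 n R)"
  then obtain p where "p < n" "x = w R (n - p)" by (auto simp: xs0_def)
  then show ?thesis by (intro exI[of _ "n - p"]) auto
qed

lemma xs0_pos: "n \<ge> 2 \<Longrightarrow> R \<ge> 2 \<Longrightarrow> \<exists>x\<in>set (xs0 n R). 0 < x"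
proof -
  assume "n \<ge> 2" "R \<ge> 2"
  have "xs0 n R ! (n - 1) \<in> set (xs0 n R)"
    by (rule nth_mem) (use \<open>n \<ge> 2\<close> in \<open>simp add: xs0_def\<close>)
  moreover have "xs0 n R ! (n - 1) = 1"
    using \<open>n \<ge> 2\<close> \<open>R \<ge> 2\<close> by (simp add: xs0_nth w_def)
  ultimately show ?thesis by (intro bexI[of _ "xs0 n R ! (n - 1)"]) auto
qed

lemma xs0_ratio:
  assumes "n \<ge> 2" "R \<ge> 2"
  shows "xmax (xs0 n R) / xmin_pos (xs0 n R) \<le> R"
proof -
  let ?S = "{x \<in> set (xs0 n R). 0 < x}"
  have ne: "?S \<noteq> {}" using xs0_pos[OF assms] by auto
  have "set (xs0 n R) \<noteq> {}" using ne by auto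
  have mx: "xmax (xs0 n R) \<le> 1"
    unfolding xmax_def
  proof (subst Max_le_iff)
    show "finite (set (xs0 n R))" by simp
    show "set (xs0 n R) \<noteq> {}" by fact
    show "\<forall>a\<in>set (xs0 n R). a \<le> 1"
    proof
      fix a assume "a \<in> set (xs0 n R)"
      then obtain k where "0 < k" "a = w R k" using xs0_set by blast
      then show "a \<le> 1" by (simp add: w_def)
    qed
  qed
  have mn: "1 / R \<le> xmin_pos (xs0 n R)"
    unfolding xmin_pos_def using ne
  proof (subst Min_ge_iff, simp, simp, intro ballI)
    fix x assume "x \<in> ?S"
    then have "x \<in> set (xs0 n R)" "0 < x" by auto
    then obtain k where k: "0 < k" "x = w R k" "0 < x" using xs0_set[of x n R] by blast
    then have "real k \<le> R" by (auto simp: w_def split: if_splits)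
    then show "1 / R \<le> x" using k by (simp add: w_def frac_le)
  qed
  have "0 < 1 / R" using assms by simp
  then have pos: "0 < xmin_pos (xs0 n R)" using mn by linarith
  have "xmax (xs0 n R) \<le> R * xmin_pos (xs0 n R)"
  proof -
    have "R * (1 / R) \<le> R * xmin_pos (xs0 n R)"
      using mn assms by (intro mult_left_mono) auto
    then have "1 \<le> R * xmin_pos (xs0 n R)" using assms by simp
    then show ?thesis using mx by linarith
  qed
  then show ?thesis using pos by (simp add: divide_le_eq)
qed

theorem theorem2:
  fixes d :: real
  assumes "d > 1"
  shows "\<exists>c > 0. \<forall>n \<ge> 2. \<forall>R \<ge> 2. \<forall>T. approx_alg d n T \<longrightarrow>
           (\<exists>xs. valid_input n xs \<and> (\<exists>x\<in>set xs. 0 < x) \<and>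
                 xmax xs / xmin_pos xs \<le> R \<and>
                 real (num_queries T xs) \<ge> c * min (ln (real n)) (ln R))"
proof (intro exI[of _ "1 / d^2"] conjI allI impI)
  show "0 < 1 / d^2" using assms by simp
  fix n :: nat and R :: real and T
  assume n: "n \<ge> 2" and R: "R \<ge> 2" and A: "approx_alg d n T"
  define X where "X = xs0 n R"
  define Q where "Q = qset T X \<inter> {..<n}"
  define L where "L = low n R Q"
  have fQ: "finite Q" using qset_finite_card[of T X] by (simp add: Q_def)
  have cQ: "card Q \<le> num_queries T X"
    using qset_finite_card[of T X] card_mono[of "qset T X" Q] by (force simp: Q_def)
  have agree: "\<forall>i\<in>qset T X. answer L i = answer X i"
  proof
    fix i assume i: "i \<in> qset T X"
    show "answer L i = answer X i"
    proof (cases "i < n")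
      case True
      then have "i \<in> Q" using i by (simp add: Q_def)
      have "L ! i = w R (n - i)" using low_agree[OF \<open>i \<in> Q\<close> True fQ] by (simp add: L_def)
      moreover have "X ! i = w R (n - i)" using True by (simp add: X_def xs0_nth)
      moreover have "length L = n" "length X = n" by (simp_all add: L_def low_def X_def xs0_def)
      ultimately show ?thesis using True by (simp add: answer_def)
    next
      case False
      have "length L = n" "length X = n" by (simp_all add: L_def low_def X_def xs0_def)
      then show ?thesis using False by (simp add: answer_def)
    qed
  qed
  from same_run[OF agree] have same: "run_output T L = run_output T X" by simp
  have vX: "valid_input n X" by (simp add: X_def valid_xs0)
  have vL: "valid_input n L" by (simp add: L_def valid_low)
  from A vX have a1: "sum_list X / d \<le> run_output T X"
    by (simp add: approx_alg_def d_approx_def)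
  from A vL have a2: "run_output T L \<le> d * sum_list L"
    by (simp add: approx_alg_def d_approx_def)
  have sL: "sum_list L \<le> real (card Q)"
    unfolding L_def by (rule low_sum[OF fQ]) (auto simp: Q_def)
  have "sum_list X \<le> d * (d * real (num_queries T X))"
  proof -
    have "sum_list X / d \<le> d * real (num_queries T X)"
    proof -
      have "sum_list L \<le> real (num_queries T X)" using sL cQ by linarith
      then have "d * sum_list L \<le> d * real (num_queries T X)"
        using assms by (intro mult_left_mono) auto
      then show ?thesis using a1 a2 same by linarith
    qed
    then show ?thesis using assms by (simp add: divide_le_eq mult.commute)
  qed
  then have "sum_list X / d^2 \<le> real (num_queries T X)"
    using assms by (simp add: pos_divide_le_eq power2_eq_square mult_ac)
  moreover have "min (ln (real n)) (ln R) \<le> sum_list X"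
    using xs0_sum[OF n R] by (simp add: X_def)
  ultimately have "1 / d^2 * min (ln (real n)) (ln R) \<le> real (num_queries T X)"
  proof -
    have "min (ln (real n)) (ln R) / d^2 \<le> sum_list X / d^2"
      by (rule divide_right_mono) (use \<open>min (ln (real n)) (ln R) \<le> sum_list X\<close> in auto)
    then show ?thesis using \<open>sum_list X / d^2 \<le> real (num_queries T X)\<close> by simp
  qed
  then show "\<exists>xs. valid_input n xs \<and> (\<exists>x\<in>set xs. 0 < x) \<and>
                 xmax xs / xmin_pos xs \<le> R \<and>
                 real (num_queries T xs) \<ge> 1 / d^2 * min (ln (real n)) (ln R)"
    using vX xs0_pos[OF n R] xs0_ratio[OF n R] unfolding X_def by blast
qed

end
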